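(* Every orthogonal, left-finite TRS is infinitarily normalising: for each orthogonal, left-finite TRS $\mathcal{R}$ and each partial term $t$ in $\mathcal{R}$, there is an $\mathcal{R}$-normal form that is strongly $p$-reachable from $t$.
   Context: Orthogonal = left-linear and non-overlapping; left-finite = all left-hand sides finite. Partial terms are terms over $\Sigma_\bot=\Sigma\uplus\{\bot\}$, ordered by $\le_\bot$ ($s\le_\bot t$ iff $s$ is $t$ with some subterms replaced by $\bot$), a complete semilattice; $\liminf_{\iota\to\alpha}a_\iota=\bigvee_{\beta<\alpha}\bigwedge_{\beta\le\iota<\alpha}a_\iota$. A reduction $(t_\iota\to_{\pi_\iota}t_{\iota+1})_{\iota<\alpha}$ with contexts $c_\iota$ ($t_\iota$ with position $\pi_\iota$ replaced by $\bot$) strongly $p$-converges to $t$ if $\liminf_{\iota\to\lambda}c_\iota=t_\lambda$ for all limit $\lambda<\alpha$, and $t$ is the last term (closed case) or $t=\liminf_{\iota\to\alpha}c_\iota$ (open case); $t$ is strongly $p$-reachable from $s$ if such a reduction from $s$ to $t$ exists. *)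

theory Defs
  imports Main
begin

text \<open>Symbols of Sigma_bot together with variables.  The signature is the type 'f
  together with an arity function ar.\<close>
datatype ('f, 'v) sym = FunS 'f | VarS 'v | BotS

type_synonym ('f, 'v) pterm = "nat list \<Rightarrow> ('f, 'v) sym option"

fun arity :: "('f \<Rightarrow> nat) \<Rightarrow> ('f, 'v) sym \<Rightarrow> nat" where
  "arity ar (FunS f) = ar f"
| "arity ar (VarS x) = 0"
| "arity ar BotS = 0"

definition wf_pterm :: "('f \<Rightarrow> nat) \<Rightarrow> ('f, 'v) pterm \<Rightarrow> bool" where
  "wf_pterm ar t \<longleftrightarrow>
     t [] \<noteq> None \<and>
     (\<forall>p i. t (p @ [i]) \<noteq> None \<longrightarrow> t p \<noteq> None) \<and>
     (\<forall>p s. t p = Some s \<longrightarrow> (\<forall>i. t (p @ [i]) \<noteq> None \<longleftrightarrow> i < arity ar s))"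

definition wf_term :: "('f \<Rightarrow> nat) \<Rightarrow> ('f, 'v) pterm \<Rightarrow> bool" where
  "wf_term ar t \<longleftrightarrow> wf_pterm ar t \<and> (\<forall>p. t p \<noteq> Some BotS)"

definition vars :: "('f, 'v) pterm \<Rightarrow> 'v set" where
  "vars t = {x. \<exists>p. t p = Some (VarS x)}"

definition bot_term :: "('f, 'v) pterm" where
  "bot_term = (\<lambda>q. if q = [] then Some BotS else None)"

definition subterm :: "('f, 'v) pterm \<Rightarrow> nat list \<Rightarrow> ('f, 'v) pterm" where
  "subterm t \<pi> = (\<lambda>q. t (\<pi> @ q))"

definition replace :: "('f, 'v) pterm \<Rightarrow> nat list \<Rightarrow> ('f, 'v) pterm \<Rightarrow> ('f, 'v) pterm" where
  "replace t \<pi> s = (\<lambda>q. if take (length \<pi>) q = \<pi> then s (drop (length \<pi>) q) else t q)"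

text \<open>Substitution application: walk down the position until a variable is hit.\<close>
fun substp :: "('v \<Rightarrow> ('f, 'v) pterm) \<Rightarrow> ('f, 'v) pterm \<Rightarrow> nat list \<Rightarrow> nat list \<Rightarrow> ('f, 'v) sym option" where
  "substp \<sigma> t p [] = (case t p of Some (VarS x) \<Rightarrow> \<sigma> x [] | v \<Rightarrow> v)"
| "substp \<sigma> t p (i # q) = (case t p of Some (VarS x) \<Rightarrow> \<sigma> x (i # q)
                                     | Some _ \<Rightarrow> substp \<sigma> t (p @ [i]) q
                                     | None \<Rightarrow> None)"

definition subst :: "('v \<Rightarrow> ('f, 'v) pterm) \<Rightarrow> ('f, 'v) pterm \<Rightarrow> ('f, 'v) pterm" where
  "subst \<sigma> t = (\<lambda>q. substp \<sigma> t [] q)"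

type_synonym ('f, 'v) trs = "(('f, 'v) pterm \<times> ('f, 'v) pterm) set"

definition trs :: "('f \<Rightarrow> nat) \<Rightarrow> ('f, 'v) trs \<Rightarrow> bool" where
  "trs ar R \<longleftrightarrow> (\<forall>(l, r) \<in> R. wf_term ar l \<and> wf_term ar r \<and>
        (\<forall>x. l [] \<noteq> Some (VarS x)) \<and> vars r \<subseteq> vars l)"

definition left_finite :: "('f, 'v) trs \<Rightarrow> bool" where
  "left_finite R \<longleftrightarrow> (\<forall>(l, r) \<in> R. finite {p. l p \<noteq> None})"

definition left_linear :: "('f, 'v) trs \<Rightarrow> bool" where
  "left_linear R \<longleftrightarrow> (\<forall>(l, r) \<in> R. \<forall>p q x. l p = Some (VarS x) \<and> l q = Some (VarS x) \<longrightarrow> p = q)"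

text \<open>Non-overlapping: no lhs unifies (after renaming apart, i.e. with two independent
  substitutions) with a non-variable subterm of a lhs, except a rule with itself at the root.\<close>
definition non_overlapping :: "('f \<Rightarrow> nat) \<Rightarrow> ('f, 'v) trs \<Rightarrow> bool" where
  "non_overlapping ar R \<longleftrightarrow> \<not> (\<exists>l1 r1 l2 r2 \<pi> f \<sigma>1 \<sigma>2.
      (l1, r1) \<in> R \<and> (l2, r2) \<in> R \<and> l2 \<pi> = Some (FunS f) \<and>
      (\<forall>x. wf_term ar (\<sigma>1 x)) \<and> (\<forall>x. wf_term ar (\<sigma>2 x)) \<and>
      subst \<sigma>1 l1 = subst \<sigma>2 (subterm l2 \<pi>) \<and>
      \<not> (\<pi> = [] \<and> (l1, r1) = (l2, r2)))"

definition orthogonal :: "('f \<Rightarrow> nat) \<Rightarrow> ('f, 'v) trs \<Rightarrow> bool" where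
  "orthogonal ar R \<longleftrightarrow> left_linear R \<and> non_overlapping ar R"

definition redex_at :: "('f \<Rightarrow> nat) \<Rightarrow> ('f, 'v) trs \<Rightarrow> nat list \<Rightarrow> ('f, 'v) pterm \<Rightarrow> bool" where
  "redex_at ar R \<pi> t \<longleftrightarrow> t \<pi> \<noteq> None \<and>
     (\<exists>(l, r) \<in> R. \<exists>\<sigma>. (\<forall>x. wf_pterm ar (\<sigma> x)) \<and> subterm t \<pi> = subst \<sigma> l)"

definition rstep :: "('f \<Rightarrow> nat) \<Rightarrow> ('f, 'v) trs \<Rightarrow> nat list \<Rightarrow> ('f, 'v) pterm \<Rightarrow> ('f, 'v) pterm \<Rightarrow> bool" where
  "rstep ar R \<pi> t t' \<longleftrightarrow> wf_pterm ar t \<and> t \<pi> \<noteq> None \<and>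
     (\<exists>(l, r) \<in> R. \<exists>\<sigma>. (\<forall>x. wf_pterm ar (\<sigma> x)) \<and> subterm t \<pi> = subst \<sigma> l \<and>
         t' = replace t \<pi> (subst \<sigma> r))"

definition normal_form :: "('f \<Rightarrow> nat) \<Rightarrow> ('f, 'v) trs \<Rightarrow> ('f, 'v) pterm \<Rightarrow> bool" where
  "normal_form ar R t \<longleftrightarrow> wf_pterm ar t \<and> (\<forall>\<pi>. \<not> redex_at ar R \<pi> t)"

definition le_bot :: "('f, 'v) pterm \<Rightarrow> ('f, 'v) pterm \<Rightarrow> bool" where
  "le_bot s t \<longleftrightarrow> (\<forall>p. s p \<noteq> None \<longrightarrow> (s p = Some BotS \<and> t p \<noteq> None) \<or> s p = t p)"

definition is_glb :: "('f \<Rightarrow> nat) \<Rightarrow> ('f, 'v) pterm set \<Rightarrow> ('f, 'v) pterm \<Rightarrow> bool" where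
  "is_glb ar S g \<longleftrightarrow> wf_pterm ar g \<and> (\<forall>s\<in>S. le_bot g s) \<and>
     (\<forall>h. wf_pterm ar h \<and> (\<forall>s\<in>S. le_bot h s) \<longrightarrow> le_bot h g)"

definition is_lub :: "('f \<Rightarrow> nat) \<Rightarrow> ('f, 'v) pterm set \<Rightarrow> ('f, 'v) pterm \<Rightarrow> bool" where
  "is_lub ar S u \<longleftrightarrow> wf_pterm ar u \<and> (\<forall>s\<in>S. le_bot s u) \<and>
     (\<forall>h. wf_pterm ar h \<and> (\<forall>s\<in>S. le_bot s h) \<longrightarrow> le_bot u h)"

definition is_liminf :: "('f \<Rightarrow> nat) \<Rightarrow> nat rel \<Rightarrow> (nat \<Rightarrow> ('f, 'v) pterm) \<Rightarrow> nat set \<Rightarrow> ('f, 'v) pterm \<Rightarrow> bool" where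
  "is_liminf ar W c A t \<longleftrightarrow>
     is_lub ar {g. \<exists>\<beta>\<in>A. is_glb ar (c ` {\<iota>\<in>A. (\<beta>, \<iota>) \<in> W}) g} t"

text \<open>A reduction of length alpha is indexed by a well-order W (on a set of naturals): the steps are indexed by I = Field W (ordinals iota < alpha),
  ts i is the term t_iota and ps i the redex position pi_iota.\<close>

definition wsucc :: "nat rel \<Rightarrow> nat \<Rightarrow> nat \<Rightarrow> bool" where
  "wsucc W i j \<longleftrightarrow> (i, j) \<in> W \<and> i \<noteq> j \<and> \<not> (\<exists>k. (i, k) \<in> W \<and> (k, j) \<in> W \<and> k \<noteq> i \<and> k \<noteq> j)"

definition wlimit :: "nat rel \<Rightarrow> nat \<Rightarrow> bool" where
  "wlimit W l \<longleftrightarrow> l \<in> Field W \<and> (\<exists>j. (j, l) \<in> W \<and> j \<noteq> l) \<and> \<not> (\<exists>j. wsucc W j l)"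

definition strongly_p_converges ::
  "('f \<Rightarrow> nat) \<Rightarrow> ('f, 'v) trs \<Rightarrow> nat rel \<Rightarrow> (nat \<Rightarrow> ('f, 'v) pterm) \<Rightarrow> (nat \<Rightarrow> nat list)
    \<Rightarrow> ('f, 'v) pterm \<Rightarrow> ('f, 'v) pterm \<Rightarrow> bool" where
  "strongly_p_converges ar R W ts ps s t \<longleftrightarrow>
     Well_order W \<and>
     (let I = Field W; c = (\<lambda>i. replace (ts i) (ps i) bot_term) in
       \<comment> \<open>empty reduction (closed): the result is the start term\<close>
       (I = {} \<longrightarrow> t = s) \<and>
       \<comment> \<open>t_0 = s\<close>
       (\<forall>i\<in>I. (\<forall>j\<in>I. (i, j) \<in> W) \<longrightarrow> ts i = s) \<and>
       \<comment> \<open>steps t_iota ->_{pi_iota} t_{iota+1}\<close>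
       (\<forall>i\<in>I. \<forall>j\<in>I. wsucc W i j \<longrightarrow> rstep ar R (ps i) (ts i) (ts j)) \<and>
       \<comment> \<open>closed (successor length) case: the last step ends in t\<close>
       (\<forall>i\<in>I. (\<forall>j\<in>I. (j, i) \<in> W) \<longrightarrow> rstep ar R (ps i) (ts i) t) \<and>
       \<comment> \<open>strong p-continuity at limit ordinals lambda < alpha\<close>
       (\<forall>l\<in>I. wlimit W l \<longrightarrow> is_liminf ar W c {i\<in>I. (i, l) \<in> W \<and> i \<noteq> l} (ts l)) \<and>
       \<comment> \<open>open (limit length) case: t is the liminf of the contexts\<close>
       (I \<noteq> {} \<and> \<not> (\<exists>m\<in>I. \<forall>j\<in>I. (j, m) \<in> W) \<longrightarrow> is_liminf ar W c I t))"

definition strongly_p_reachable :: "('f \<Rightarrow> nat) \<Rightarrow> ('f, 'v) trs \<Rightarrow> ('f, 'v) pterm \<Rightarrow> ('f, 'v) pterm \<Rightarrow> bool" where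
  "strongly_p_reachable ar R s t \<longleftrightarrow> (\<exists>W ts ps. strongly_p_converges ar R W ts ps s t)"

end

theory Submission
  imports Defs "HOL-Library.Nat_Bijection"
begin


lemma wf_prefix1: "wf_pterm ar t \<Longrightarrow> t (p @ [i]) \<noteq> None \<Longrightarrow> t p \<noteq> None"
  unfolding wf_pterm_def by blast

lemma wf_arity: "wf_pterm ar t \<Longrightarrow> t p = Some s \<Longrightarrow> (t (p @ [i]) \<noteq> None) = (i < arity ar s)"
  unfolding wf_pterm_def by blast

lemma wf_root: "wf_pterm ar t \<Longrightarrow> t [] \<noteq> None"
  unfolding wf_pterm_def by blast

lemma wf_prefix: "wf_pterm ar t \<Longrightarrow> t (p @ q) \<noteq> None \<Longrightarrow> t p \<noteq> None"
proof (induction q rule: rev_induct)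
  case Nil then show ?case by simp
next
  case (snoc x xs) then show ?case using wf_prefix1[of ar t "p @ xs" x] by simp
qed

lemma wf_child_fun: "wf_pterm ar t \<Longrightarrow> t (p @ [i]) \<noteq> None \<Longrightarrow> \<exists>f. t p = Some (FunS f) \<and> i < ar f"
proof -
  assume a: "wf_pterm ar t" "t (p @ [i]) \<noteq> None"
  then obtain s where s: "t p = Some s" using wf_prefix1 by blast
  then have "i < arity ar s" using wf_arity[OF a(1) s] a(2) by simp
  then show ?thesis using s by (cases s) auto
qed

lemma wf_strict_prefix_fun: "wf_pterm ar t \<Longrightarrow> t (p @ i # q) \<noteq> None \<Longrightarrow> \<exists>f. t p = Some (FunS f) \<and> i < ar f"
  using wf_prefix[of ar t "p @ [i]" q] wf_child_fun by fastforce

lemma wf_subterm: "wf_pterm ar t \<Longrightarrow> t \<pi> \<noteq> None \<Longrightarrow> wf_pterm ar (subterm t \<pi>)"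
  unfolding wf_pterm_def subterm_def by (metis append.assoc append_Nil2)

lemma var_unique: "wf_pterm ar t \<Longrightarrow> t q = Some (VarS x) \<Longrightarrow> t (q @ d) \<noteq> None \<Longrightarrow> d = []"
  by (cases d) (use wf_strict_prefix_fun in fastforce)+

lemma bot_wf: "wf_pterm ar bot_term"
  unfolding wf_pterm_def bot_term_def by auto

lemma substp_S1: "wf_pterm ar t \<Longrightarrow> t (p @ q) = Some v \<Longrightarrow> (\<forall>x. v \<noteq> VarS x) \<Longrightarrow> substp \<sigma> t p q = Some v"
proof (induction q arbitrary: p)
  case Nil then show ?case by (cases v) auto
next
  case (Cons i q)
  obtain f where f: "t p = Some (FunS f)" using wf_strict_prefix_fun[of ar t p i q] Cons.prems by auto
  have "substp \<sigma> t (p @ [i]) q = Some v" using Cons by simp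
  then show ?case using f by simp
qed

lemma substp_S2: "wf_pterm ar t \<Longrightarrow> t (p @ q1) = Some (VarS x) \<Longrightarrow> substp \<sigma> t p (q1 @ q2) = \<sigma> x q2"
proof (induction q1 arbitrary: p)
  case Nil then show ?case by (cases q2) auto
next
  case (Cons i q)
  obtain f where f: "t p = Some (FunS f)" using wf_strict_prefix_fun[of ar t p i q] Cons.prems by auto
  have "substp \<sigma> t (p @ [i]) (q @ q2) = \<sigma> x q2" using Cons by simp
  then show ?case using f by simp
qed

lemma substp_S3: "(\<forall>q1 q2 x. q = q1 @ q2 \<longrightarrow> t (p @ q1) \<noteq> Some (VarS x)) \<Longrightarrow> t (p @ q) = None \<Longrightarrow> substp \<sigma> t p q = None"
proof (induction q arbitrary: p)
  case Nil then show ?case by simp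
next
  case (Cons i q)
  have nv: "\<forall>x. t p \<noteq> Some (VarS x)" using Cons.prems(1)[rule_format, of "[]"] by simp
  have ih: "substp \<sigma> t (p @ [i]) q = None"
    using Cons.IH[of "p @ [i]"] Cons.prems by (metis append.assoc append_Cons append_Nil)
  show ?case
  proof (cases "t p")
    case None then show ?thesis by simp
  next
    case (Some s) then show ?thesis using nv ih by (cases s) auto
  qed
qed

definition varpos :: "('f,'v) pterm \<Rightarrow> nat list \<Rightarrow> bool" where
  "varpos t q \<longleftrightarrow> (\<exists>q1 q2 x. q = q1 @ q2 \<and> t q1 = Some (VarS x))"

lemma subst_var: "wf_pterm ar t \<Longrightarrow> t q1 = Some (VarS x) \<Longrightarrow> subst \<sigma> t (q1 @ q2) = \<sigma> x q2"
  unfolding subst_def using substp_S2[of ar t "[]" q1 x \<sigma> q2] by simp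

lemma subst_nonvar: "wf_pterm ar t \<Longrightarrow> \<not> varpos t q \<Longrightarrow> subst \<sigma> t q = t q"
proof -
  assume w: "wf_pterm ar t" and nv: "\<not> varpos t q"
  show ?thesis
  proof (cases "t q")
    case None then show ?thesis unfolding subst_def using substp_S3[of q t "[]" \<sigma>] nv unfolding varpos_def by auto
  next
    case (Some v)
    have "\<forall>x. v \<noteq> VarS x" using nv Some unfolding varpos_def by (metis append_Nil2)
    then show ?thesis unfolding subst_def using substp_S1[of ar t "[]" q v \<sigma>] w Some by simp
  qed
qed



lemma varpos_snoc: "wf_pterm ar t \<Longrightarrow> \<not> varpos t p \<Longrightarrow> varpos t (p @ [i]) \<Longrightarrow> \<exists>x. t (p @ [i]) = Some (VarS x)"
  unfolding varpos_def
  by (metis append_Nil2 butlast_append butlast_snoc)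

lemma wf_subst: assumes w: "wf_pterm ar t" and ws: "\<forall>x. wf_pterm ar (\<sigma> x)"
  shows "wf_pterm ar (subst \<sigma> t)"
proof -
  have root: "subst \<sigma> t [] \<noteq> None"
  proof (cases "varpos t []")
    case True
    then obtain x where "t [] = Some (VarS x)" unfolding varpos_def by auto
    then show ?thesis using subst_var[OF w, of "[]" x \<sigma> "[]"] ws wf_root by fastforce
  next
    case False then show ?thesis using subst_nonvar[OF w] wf_root[OF w] by simp
  qed
  have pre: "subst \<sigma> t (p @ [i]) \<noteq> None \<Longrightarrow> subst \<sigma> t p \<noteq> None" for p i
  proof -
    assume a: "subst \<sigma> t (p @ [i]) \<noteq> None"
    show ?thesis
    proof (cases "varpos t p")
      case True
      then obtain q1 q2 x where d: "p = q1 @ q2" "t q1 = Some (VarS x)" unfolding varpos_def by auto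
      have "subst \<sigma> t (q1 @ (q2 @ [i])) = \<sigma> x (q2 @ [i])" using subst_var[OF w d(2)] .
      then have "\<sigma> x (q2 @ [i]) \<noteq> None" using a d by simp
      then have "\<sigma> x q2 \<noteq> None" using ws wf_prefix1 by metis
      then show ?thesis using subst_var[OF w d(2)] d by simp
    next
      case False
      have "t p \<noteq> None"
      proof (cases "varpos t (p @ [i])")
        case True
        then obtain x where "t (p @ [i]) = Some (VarS x)" using varpos_snoc[OF w False] by auto
        then show ?thesis using wf_prefix1[OF w] by auto
      next
        case False
        then show ?thesis using a subst_nonvar[OF w False] wf_prefix1[OF w] by auto
      qed
      then show ?thesis using subst_nonvar[OF w False] by simp
    qed
  qed
  have ar: "subst \<sigma> t p = Some s \<Longrightarrow> (subst \<sigma> t (p @ [i]) \<noteq> None) = (i < arity ar s)" for p s i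
  proof -
    assume a: "subst \<sigma> t p = Some s"
    show ?thesis
    proof (cases "varpos t p")
      case True
      then obtain q1 q2 x where d: "p = q1 @ q2" "t q1 = Some (VarS x)" unfolding varpos_def by auto
      have e1: "subst \<sigma> t (p @ [i]) = \<sigma> x (q2 @ [i])" using subst_var[OF w d(2), of \<sigma> "q2 @ [i]"] d by simp
      have "\<sigma> x q2 = Some s" using subst_var[OF w d(2), of \<sigma> q2] d a by simp
      then show ?thesis using e1 wf_arity ws by metis
    next
      case False
      have tp: "t p = Some s" using a subst_nonvar[OF w False] by simp
      show ?thesis
      proof (cases "varpos t (p @ [i])")
        case True
        then obtain x where x: "t (p @ [i]) = Some (VarS x)" using varpos_snoc[OF w False] by auto
        have "subst \<sigma> t (p @ [i]) = \<sigma> x []" using subst_var[OF w x, of \<sigma> "[]"] by simp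
        then have "subst \<sigma> t (p @ [i]) \<noteq> None" using ws wf_root by metis
        moreover have "i < arity ar s" using wf_arity[OF w tp, of i] x by (metis option.distinct(1))
        ultimately show ?thesis by simp
      next
        case False
        then show ?thesis using subst_nonvar[OF w False] wf_arity[OF w tp] by simp
      qed
    qed
  qed
  show ?thesis unfolding wf_pterm_def using root pre ar by blast
qed



lemma take_snoc_eq: "(take (length \<pi>) (p @ [i]) = \<pi>) \<longleftrightarrow> (take (length \<pi>) p = \<pi> \<or> \<pi> = p @ [i])"
  by (metis butlast_snoc length_append_singleton less_Suc_eq
    linorder_le_less_linear not_less_iff_gr_or_eq take_all
    take_butlast)

lemma rep_in: "take (length \<pi>) q = \<pi> \<Longrightarrow> replace t \<pi> s q = s (drop (length \<pi>) q)"
  unfolding replace_def by simp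
lemma rep_out: "take (length \<pi>) q \<noteq> \<pi> \<Longrightarrow> replace t \<pi> s q = t q"
  unfolding replace_def by simp

lemma take_len_le: "take (length \<pi>) p = \<pi> \<Longrightarrow> length \<pi> \<le> length p"
  by (metis length_take min.bounded_iff nle_le)

lemma drop_snoc': "take (length \<pi>) p = \<pi> \<Longrightarrow> drop (length \<pi>) (p @ [i]) = drop (length \<pi>) p @ [i]"
  using take_len_le[of \<pi> p] by simp

lemma wf_replace: assumes w: "wf_pterm ar t" and tp: "t \<pi> \<noteq> None" and ws: "wf_pterm ar s"
  shows "wf_pterm ar (replace t \<pi> s)"
proof -
  have root: "replace t \<pi> s [] \<noteq> None"
    using w ws wf_root unfolding replace_def by (cases \<pi>) auto
  have pre: "replace t \<pi> s (p @ [i]) \<noteq> None \<Longrightarrow> replace t \<pi> s p \<noteq> None" for p i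
  proof -
    assume a: "replace t \<pi> s (p @ [i]) \<noteq> None"
    consider "take (length \<pi>) p = \<pi>" | "\<pi> = p @ [i]" | "take (length \<pi>) (p @ [i]) \<noteq> \<pi>"
      using take_snoc_eq[of \<pi> p i] by blast
    then show ?thesis
    proof cases
      case 1
      have tk: "take (length \<pi>) (p @ [i]) = \<pi>" using 1 take_snoc_eq[of \<pi> p i] by blast
      have "s (drop (length \<pi>) p @ [i]) \<noteq> None" using a by (simp add: rep_in[OF tk] drop_snoc'[OF 1] take_len_le[OF 1])
      then have "s (drop (length \<pi>) p) \<noteq> None" using wf_prefix1[OF ws] by blast
      then show ?thesis by (simp add: rep_in[OF 1])
    next
      case 2
      then have n: "take (length \<pi>) p \<noteq> \<pi>" by simp
      have "t p \<noteq> None" using 2 tp wf_prefix1[OF w, of p i] by simp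
      then show ?thesis by (simp add: rep_out[OF n])
    next
      case 3
      then have n: "take (length \<pi>) p \<noteq> \<pi>" using take_snoc_eq[of \<pi> p i] by blast
      have "t (p @ [i]) \<noteq> None" using a by (simp add: rep_out[OF 3])
      then show ?thesis using wf_prefix1[OF w, of p i] by (simp add: rep_out[OF n])
    qed
  qed
  have ar: "replace t \<pi> s p = Some v \<Longrightarrow> (replace t \<pi> s (p @ [i]) \<noteq> None) = (i < arity ar v)" for p v i
  proof -
    assume a: "replace t \<pi> s p = Some v"
    show ?thesis
    proof (cases "take (length \<pi>) p = \<pi>")
      case True
      have tk: "take (length \<pi>) (p @ [i]) = \<pi>" using True take_snoc_eq[of \<pi> p i] by blast
      have e: "replace t \<pi> s (p @ [i]) = s (drop (length \<pi>) p @ [i])" by (simp add: rep_in[OF tk] drop_snoc'[OF True] take_len_le[OF True])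
      have "s (drop (length \<pi>) p) = Some v" using a by (simp add: rep_in[OF True])
      then show ?thesis using e wf_arity[OF ws, of "drop (length \<pi>) p" v i] by simp
    next
      case False
      have tpv: "t p = Some v" using a by (simp add: rep_out[OF False])
      show ?thesis
      proof (cases "\<pi> = p @ [i]")
        case True
        then have "replace t \<pi> s (p @ [i]) = s []" using rep_in[of \<pi> "p @ [i]"] by simp
        then show ?thesis using True tp wf_arity[OF w tpv, of i] wf_root[OF ws] by simp
      next
        case F2: False
        have n: "take (length \<pi>) (p @ [i]) \<noteq> \<pi>" using False F2 take_snoc_eq[of \<pi> p i] by blast
        show ?thesis using wf_arity[OF w tpv, of i] by (simp add: rep_out[OF n])
      qed
    qed
  qed
  show ?thesis unfolding wf_pterm_def using root pre ar by blast
qed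

lemma wf_term_pterm: "wf_term ar t \<Longrightarrow> wf_pterm ar t" unfolding wf_term_def by simp

lemma rstep_wf: "trs ar R \<Longrightarrow> rstep ar R \<pi> t t' \<Longrightarrow> wf_pterm ar t'"
proof -
  assume tr: "trs ar R" and st: "rstep ar R \<pi> t t'"
  then obtain l r \<sigma> where lr: "(l, r) \<in> R" and ws: "\<forall>x. wf_pterm ar (\<sigma> x)" and w: "wf_pterm ar t"
    and tp: "t \<pi> \<noteq> None" and t': "t' = replace t \<pi> (subst \<sigma> r)"
    unfolding rstep_def by blast
  have "wf_term ar r" using tr lr unfolding trs_def by blast
  then have "wf_pterm ar (subst \<sigma> r)" using wf_subst ws wf_term_pterm by blast
  then show ?thesis using wf_replace[OF w tp] t' by simp
qed

lemma redex_rstep: "wf_pterm ar t \<Longrightarrow> redex_at ar R \<pi> t \<Longrightarrow> \<exists>t'. rstep ar R \<pi> t t'"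
  unfolding redex_at_def rstep_def by blast



lemma varpos_snoc_mono: "varpos t q \<Longrightarrow> varpos t (q @ [i])"
  unfolding varpos_def by (metis append.assoc)

lemma match_subst:
  assumes ws: "wf_pterm ar s" and wl: "wf_term ar l"
    and lin: "\<forall>p q x. l p = Some (VarS x) \<and> l q = Some (VarS x) \<longrightarrow> p = q"
    and rnv: "\<forall>x. l [] \<noteq> Some (VarS x)"
    and fn: "\<forall>q f. l q = Some (FunS f) \<longrightarrow> s q = Some (FunS f)"
  shows "\<exists>\<sigma>. (\<forall>x. wf_pterm ar (\<sigma> x)) \<and> s = subst \<sigma> l"
proof -
  have wl': "wf_pterm ar l" using wl wf_term_pterm by blast
  have nb: "\<forall>p. l p \<noteq> Some BotS" using wl unfolding wf_term_def by blast
  define \<sigma> where "\<sigma> x = (if \<exists>q. l q = Some (VarS x) then subterm s (SOME q. l q = Some (VarS x)) else bot_term)" for x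
  have sdef: "s q1 \<noteq> None" if v: "l q1 = Some (VarS x)" for q1 x
  proof -
    have "q1 \<noteq> []" using rnv v by auto
    then obtain q0 j where q: "q1 = q0 @ [j]" by (metis rev_exhaust)
    obtain f where f: "l q0 = Some (FunS f)" "j < ar f" using wf_child_fun[OF wl', of q0 j] v q by auto
    have "s q0 = Some (FunS f)" using fn f by blast
    then show ?thesis using wf_arity[OF ws, of q0 "FunS f" j] f q by simp
  qed
  have some_eq: "(SOME q. l q = Some (VarS x)) = q1" if v: "l q1 = Some (VarS x)" for q1 x
  proof -
    have "l (SOME q. l q = Some (VarS x)) = Some (VarS x)" using v by (rule someI)
    then show ?thesis using lin v by blast
  qed
  have wsig: "\<forall>x. wf_pterm ar (\<sigma> x)"
  proof
    fix x
    show "wf_pterm ar (\<sigma> x)"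
    proof (cases "\<exists>q. l q = Some (VarS x)")
      case True
      then obtain q1 where v: "l q1 = Some (VarS x)" by blast
      then have "\<sigma> x = subterm s q1" unfolding \<sigma>_def using some_eq[OF v] by auto
      then show ?thesis using wf_subterm[OF ws sdef[OF v]] by simp
    next
      case False then show ?thesis unfolding \<sigma>_def using bot_wf by simp
    qed
  qed
  have nonvar: "\<not> varpos l q \<Longrightarrow> s q = l q" for q
  proof (induction q rule: rev_induct)
    case Nil
    obtain v where v: "l [] = Some v" using wf_root[OF wl'] by blast
    have "\<forall>x. v \<noteq> VarS x" using rnv v by auto
    moreover have "v \<noteq> BotS" using nb v by auto
    ultimately obtain f where "v = FunS f" by (cases v) auto
    then show ?case using fn v by simp
  next
    case (snoc i q)
    have nq: "\<not> varpos l q" using snoc.prems varpos_snoc_mono by blast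
    have ih: "s q = l q" using snoc.IH[OF nq] .
    show ?case
    proof (cases "l (q @ [i])")
      case (Some v)
      have "\<forall>x. v \<noteq> VarS x" using snoc.prems Some unfolding varpos_def by (metis append_Nil2)
      moreover have "v \<noteq> BotS" using nb Some by auto
      ultimately obtain f where "v = FunS f" by (cases v) auto
      then show ?thesis using fn Some by simp
    next
      case None
      show ?thesis
      proof (cases "l q")
        case None
        then have "s q = None" using ih by simp
        then show ?thesis using wf_prefix1[OF ws, of q i] \<open>l (q @ [i]) = None\<close> by (metis option.exhaust)
      next
        case (Some w)
        have "(s (q @ [i]) \<noteq> None) = (i < arity ar w)" using wf_arity[OF ws] ih Some by simp
        moreover have "(l (q @ [i]) \<noteq> None) = (i < arity ar w)" using wf_arity[OF wl'] Some by simp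
        ultimately show ?thesis using \<open>l (q @ [i]) = None\<close> by auto
      qed
    qed
  qed
  have "s = subst \<sigma> l"
  proof
    fix q
    show "s q = subst \<sigma> l q"
    proof (cases "varpos l q")
      case True
      then obtain q1 q2 x where d: "q = q1 @ q2" "l q1 = Some (VarS x)" unfolding varpos_def by auto
      have "subst \<sigma> l q = \<sigma> x q2" using subst_var[OF wl' d(2)] d(1) by simp
      also have "\<dots> = s (q1 @ q2)" unfolding \<sigma>_def using some_eq[OF d(2)] d(2) by (auto simp: subterm_def)
      finally show ?thesis using d by simp
    next
      case False
      then show ?thesis using subst_nonvar[OF wl' False] nonvar by simp
    qed
  qed
  then show ?thesis using wsig by blast
qed

lemma subst_fun: "wf_pterm ar l \<Longrightarrow> l q = Some (FunS f) \<Longrightarrow> subst \<sigma> l q = Some (FunS f)"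
  unfolding subst_def using substp_S1[of ar l "[]" q "FunS f" \<sigma>] by simp



lemma le_bot_antisym: "le_bot a b \<Longrightarrow> le_bot b a \<Longrightarrow> a = b"
  unfolding le_bot_def by (rule ext) (metis option.exhaust)

lemma le_bot_trans: "le_bot a b \<Longrightarrow> le_bot b c \<Longrightarrow> le_bot a c"
  unfolding le_bot_def by metis

lemma glb_unique: "is_glb ar S g \<Longrightarrow> is_glb ar S g' \<Longrightarrow> g = g'"
  unfolding is_glb_def using le_bot_antisym by blast

definition agree :: "('f,'v) pterm set \<Rightarrow> nat list \<Rightarrow> bool" where
  "agree S q \<longleftrightarrow> (\<exists>v. \<forall>s\<in>S. s q = Some v)"

definition glbS :: "('f,'v) pterm set \<Rightarrow> ('f,'v) pterm" where
  "glbS S p = (if (\<forall>k<length p. agree S (take k p)) \<and> (\<forall>s\<in>S. s p \<noteq> None)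
      then (if agree S p then (SOME s. s \<in> S) p else Some BotS) else None)"

lemma take_snoc_k: "k < Suc (length p) \<Longrightarrow> take k (p @ [i]) = (if k = length p then p else take k p)"
  by auto

lemma conds_snoc: "(\<forall>k<length (p @ [i]). agree S (take k (p @ [i]))) \<longleftrightarrow> (\<forall>k<length p. agree S (take k p)) \<and> agree S p"
  using less_Suc_eq by fastforce

lemma wf_strict_take: "wf_pterm ar h \<Longrightarrow> h p \<noteq> None \<Longrightarrow> k < length p \<Longrightarrow> \<exists>f. h (take k p) = Some (FunS f)"
  by (metis id_take_nth_drop wf_strict_prefix_fun)

lemma glb_wf: assumes ne: "S \<noteq> {}" and w: "\<forall>s\<in>S. wf_pterm ar s" shows "wf_pterm ar (glbS S)"
proof -
  have s0: "(SOME s. s \<in> S) \<in> S" using ne by (simp add: some_in_eq)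
  have root: "glbS S [] \<noteq> None" unfolding glbS_def using w wf_root s0 by auto
  have pre: "glbS S (p @ [i]) \<noteq> None \<Longrightarrow> glbS S p \<noteq> None" for p i
  proof -
    assume a: "glbS S (p @ [i]) \<noteq> None"
    then have c: "(\<forall>k<length p. agree S (take k p)) \<and> agree S p"
      unfolding glbS_def using conds_snoc by (metis (no_types, lifting))
    then have "\<forall>s\<in>S. s p \<noteq> None" unfolding agree_def by auto
    then show ?thesis using c s0 unfolding glbS_def by auto
  qed
  have ar: "glbS S p = Some v \<Longrightarrow> (glbS S (p @ [i]) \<noteq> None) = (i < arity ar v)" for p v i
  proof -
    assume a: "glbS S p = Some v"
    then have c: "(\<forall>k<length p. agree S (take k p))" "\<forall>s\<in>S. s p \<noteq> None"
      unfolding glbS_def by (metis option.distinct(1))+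
    show ?thesis
    proof (cases "agree S p")
      case True
      then obtain u where u: "\<forall>s\<in>S. s p = Some u" unfolding agree_def by blast
      have vu: "v = u" using a c True s0 u unfolding glbS_def by auto
      have "(glbS S (p @ [i]) \<noteq> None) = (\<forall>s\<in>S. s (p @ [i]) \<noteq> None)"
        using c True conds_snoc[of p i S] s0 unfolding glbS_def by (auto split: if_splits)
      also have "\<dots> = (i < arity ar v)" using u vu w wf_arity ne by blast
      finally show ?thesis .
    next
      case False
      then have "v = BotS" using a c unfolding glbS_def by auto
      moreover have "glbS S (p @ [i]) = None" using False conds_snoc[of p i S] unfolding glbS_def by auto
      ultimately show ?thesis by simp
    qed
  qed
  show ?thesis unfolding wf_pterm_def using root pre ar by blast
qed

lemma glb_lower: assumes "s \<in> S" shows "le_bot (glbS S) s"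
  unfolding le_bot_def
proof (intro allI impI)
  fix p assume a: "glbS S p \<noteq> None"
  then have c: "\<forall>s\<in>S. s p \<noteq> None" unfolding glbS_def by (metis)
  show "glbS S p = Some BotS \<and> s p \<noteq> None \<or> glbS S p = s p"
  proof (cases "agree S p")
    case True
    have s0: "(SOME s. s \<in> S) \<in> S" using assms by (metis someI)
    have "glbS S p = (SOME s. s \<in> S) p" using a True unfolding glbS_def by (auto split: if_splits)
    moreover obtain u where "\<forall>s\<in>S. s p = Some u" using True unfolding agree_def by blast
    ultimately show ?thesis using s0 assms by (metis (no_types, lifting))
  next
    case False then show ?thesis using a c assms unfolding glbS_def by (auto split: if_splits)
  qed
qed

lemma le_botD: "le_bot a b \<Longrightarrow> a p \<noteq> None \<Longrightarrow> a p \<noteq> Some BotS \<Longrightarrow> b p = a p"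
  unfolding le_bot_def by auto
lemma le_botD2: "le_bot a b \<Longrightarrow> a p \<noteq> None \<Longrightarrow> b p \<noteq> None"
  unfolding le_bot_def by auto

lemma glb_greatest: assumes ne: "S \<noteq> {}" and wh: "wf_pterm ar h" and lb: "\<forall>s\<in>S. le_bot h s"
  shows "le_bot h (glbS S)"
  unfolding le_bot_def
proof (intro allI impI)
  fix p assume hp: "h p \<noteq> None"
  have pk: "\<forall>k<length p. agree S (take k p)"
  proof (intro allI impI)
    fix k assume "k < length p"
    then obtain f where f: "h (take k p) = Some (FunS f)" using wf_strict_take[OF wh hp] by blast
    then have "\<forall>s\<in>S. s (take k p) = Some (FunS f)" using lb le_botD[of h _ "take k p"] by simp
    then show "agree S (take k p)" unfolding agree_def by blast
  qed
  have sp: "\<forall>s\<in>S. s p \<noteq> None" using lb hp le_botD2 by blast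
  show "h p = Some BotS \<and> glbS S p \<noteq> None \<or> h p = glbS S p"
  proof (cases "h p = Some BotS")
    case True
    have s0: "(SOME s. s \<in> S) \<in> S" using ne by (simp add: some_in_eq)
    then show ?thesis using pk sp True unfolding glbS_def by auto
  next
    case False
    then have e: "\<forall>s\<in>S. s p = h p" using lb hp le_botD by blast
    obtain y where y: "h p = Some y" using hp by auto
    have ag: "agree S p" unfolding agree_def by (rule exI[of _ y]) (use e y in simp)
    have s0: "(SOME s. s \<in> S) \<in> S" using ne by (simp add: some_in_eq)
    show ?thesis using pk sp ag e s0 unfolding glbS_def by auto
  qed
qed

lemma glb_is: "S \<noteq> {} \<Longrightarrow> \<forall>s\<in>S. wf_pterm ar s \<Longrightarrow> is_glb ar S (glbS S)"
proof -
  assume "S \<noteq> {}" "\<forall>s\<in>S. wf_pterm ar s"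
  then show ?thesis unfolding is_glb_def
    using glb_wf[of S ar] glb_lower[of _ S] glb_greatest[of S ar] by auto
qed

lemma glb_nonbot: assumes "glbS S p = Some v" "v \<noteq> BotS" shows "\<forall>s\<in>S. s p = Some v"
proof -
  have "agree S p" using assms unfolding glbS_def by (auto split: if_splits)
  then obtain u where u: "\<forall>s\<in>S. s p = Some u" unfolding agree_def by blast
  show ?thesis
  proof (cases "S = {}")
    case False
    have s0: "(SOME s. s \<in> S) \<in> S" using False by (simp add: some_in_eq)
    then have "glbS S p = Some u" using assms \<open>agree S p\<close> u unfolding glbS_def by (auto split: if_splits)
    then show ?thesis using u assms by simp
  qed simp
qed



definition lubC :: "(nat \<Rightarrow> ('f,'v) pterm) \<Rightarrow> ('f,'v) pterm" where
  "lubC g p = g (SOME N. \<forall>n\<ge>N. g n p = g N p) p"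

lemma chain_evconst:
  assumes mono: "\<forall>i j. i \<le> j \<longrightarrow> le_bot (g i) (g j)"
  shows "\<exists>N. \<forall>n\<ge>N. g n p = g N p"
proof (cases "\<exists>n v. g n p = Some v \<and> v \<noteq> BotS")
  case True
  then obtain n v where nv: "g n p = Some v" "v \<noteq> BotS" by blast
  have "\<forall>m\<ge>n. g m p = g n p" using mono le_botD[of "g n" _ p] nv by simp
  then show ?thesis by blast
next
  case F: False
  show ?thesis
  proof (cases "\<exists>n. g n p = Some BotS")
    case True
    then obtain n where n: "g n p = Some BotS" by blast
    have "\<forall>m\<ge>n. g m p = g n p"
    proof (intro allI impI)
      fix m assume "n \<le> m"
      then have "g m p \<noteq> None" using mono le_botD2[of "g n" _ p] n by simp
      then show "g m p = g n p" using F n by auto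
    qed
    then show ?thesis by blast
  next
    case False
    then have "\<forall>m. g m p = None" using F by (metis option.exhaust)
    then show ?thesis by simp
  qed
qed

lemma lub_ev:
  assumes mono: "\<forall>i j. i \<le> j \<longrightarrow> le_bot (g i) (g j)"
  shows "\<exists>N. \<forall>n\<ge>N. g n p = lubC g p"
proof -
  let ?N = "SOME N. \<forall>n\<ge>N. g n p = g N p"
  have "\<forall>n\<ge>?N. g n p = g ?N p" using chain_evconst[OF mono, of p] by (rule someI_ex)
  then show ?thesis unfolding lubC_def by blast
qed

lemma lub_ev2:
  assumes mono: "\<forall>i j. i \<le> j \<longrightarrow> le_bot (g i) (g j)"
  shows "\<exists>N. \<forall>n\<ge>N. g n p = lubC g p \<and> g n q = lubC g q"
proof -
  obtain N1 where 1: "\<forall>n\<ge>N1. g n p = lubC g p" using lub_ev[OF mono, of p] by blast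
  obtain N2 where 2: "\<forall>n\<ge>N2. g n q = lubC g q" using lub_ev[OF mono, of q] by blast
  show ?thesis using 1 2 by (intro exI[of _ "max N1 N2"]) auto
qed

lemma lub_is:
  assumes mono: "\<forall>i j. i \<le> j \<longrightarrow> le_bot (g i) (g j)" and w: "\<And>i. wf_pterm ar (g i)"
  shows "is_lub ar (range g) (lubC g)"
proof -
  have root: "lubC g [] \<noteq> None"
  proof -
    obtain N where "\<forall>n\<ge>N. g n [] = lubC g []" using lub_ev[OF mono, of "[]"] by blast
    then show ?thesis using wf_root[OF w, of N] by auto
  qed
  have pre: "lubC g (p @ [i]) \<noteq> None \<Longrightarrow> lubC g p \<noteq> None" for p i
  proof -
    assume a: "lubC g (p @ [i]) \<noteq> None"
    obtain N where N: "\<forall>n\<ge>N. g n p = lubC g p \<and> g n (p @ [i]) = lubC g (p @ [i])" using lub_ev2[OF mono, of p "p @ [i]"] by blast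
    then show ?thesis using a wf_prefix1[OF w, of N p i] by auto
  qed
  have ar: "lubC g p = Some v \<Longrightarrow> (lubC g (p @ [i]) \<noteq> None) = (i < arity ar v)" for p v i
  proof -
    assume a: "lubC g p = Some v"
    obtain N where N: "\<forall>n\<ge>N. g n p = lubC g p \<and> g n (p @ [i]) = lubC g (p @ [i])" using lub_ev2[OF mono, of p "p @ [i]"] by blast
    then have "g N p = Some v" "g N (p @ [i]) = lubC g (p @ [i])" using a by auto
    then show ?thesis using wf_arity[OF w, of N p v i] by simp
  qed
  have wfl: "wf_pterm ar (lubC g)" unfolding wf_pterm_def using root pre ar by blast
  have ub: "le_bot (g n) (lubC g)" for n
    unfolding le_bot_def
  proof (intro allI impI)
    fix p assume a: "g n p \<noteq> None"
    obtain N where N: "\<forall>m\<ge>N. g m p = lubC g p" using lub_ev[OF mono, of p] by blast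
    have "le_bot (g n) (g (max n N))" using mono by simp
    moreover have "g (max n N) p = lubC g p" using N by simp
    ultimately show "g n p = Some BotS \<and> lubC g p \<noteq> None \<or> g n p = lubC g p"
      using a unfolding le_bot_def by metis
  qed
  have least: "le_bot (lubC g) h" if h: "\<forall>n. le_bot (g n) h" for h
    unfolding le_bot_def
  proof (intro allI impI)
    fix p assume a: "lubC g p \<noteq> None"
    obtain N where N: "\<forall>m\<ge>N. g m p = lubC g p" using lub_ev[OF mono, of p] by blast
    then have "g N p = lubC g p" by simp
    then show "lubC g p = Some BotS \<and> h p \<noteq> None \<or> lubC g p = h p"
      using h a unfolding le_bot_def by metis
  qed
  show ?thesis unfolding is_lub_def using wfl ub least by blast
qed

lemma lub_val: "lubC g p = Some v \<Longrightarrow> \<exists>n. g n p = Some v"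
  unfolding lubC_def by blast



definition enum :: "nat \<Rightarrow> nat list" where
  "enum m = list_decode (fst (prod_decode m))"

lemma enum_inf: "\<exists>m\<ge>N. enum m = \<pi>"
  by (rule exI[of _ "prod_encode (list_encode \<pi>, N)"]) (simp add: enum_def le_prod_encode_2)

definition pos_of :: "('f \<Rightarrow> nat) \<Rightarrow> ('f, 'v) trs \<Rightarrow> ('f,'v) pterm \<Rightarrow> nat \<Rightarrow> nat list" where
  "pos_of ar R t n = enum (LEAST k. n \<le> k \<and> redex_at ar R (enum k) t)"

primrec seq :: "('f \<Rightarrow> nat) \<Rightarrow> ('f, 'v) trs \<Rightarrow> ('f,'v) pterm \<Rightarrow> nat \<Rightarrow> ('f,'v) pterm" where
  "seq ar R t 0 = t"
| "seq ar R t (Suc n) = (SOME t'. rstep ar R (pos_of ar R (seq ar R t n) n) (seq ar R t n) t')"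

lemma pos_of_redex: assumes "wf_pterm ar t" "\<not> normal_form ar R t"
  shows "redex_at ar R (pos_of ar R t n) t"
proof -
  obtain \<pi> where "redex_at ar R \<pi> t" using assms unfolding normal_form_def by blast
  moreover obtain m where "m \<ge> n" "enum m = \<pi>" using enum_inf by blast
  ultimately have "\<exists>k. n \<le> k \<and> redex_at ar R (enum k) t" by blast
  then show ?thesis unfolding pos_of_def by (metis (mono_tags, lifting) LeastI_ex)
qed

lemma seq_step: assumes "wf_pterm ar (seq ar R t n)" "\<not> normal_form ar R (seq ar R t n)"
  shows "rstep ar R (pos_of ar R (seq ar R t n) n) (seq ar R t n) (seq ar R t (Suc n))"
proof -
  have "\<exists>t'. rstep ar R (pos_of ar R (seq ar R t n) n) (seq ar R t n) t'"
    using redex_rstep[OF assms(1) pos_of_redex[OF assms]] .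
  then show ?thesis by (simp add: someI_ex)
qed

lemma seq_wf: assumes tr: "trs ar R" and w: "wf_pterm ar t"
  shows "(\<forall>k<n. \<not> normal_form ar R (seq ar R t k)) \<Longrightarrow> wf_pterm ar (seq ar R t n)"
proof (induction n)
  case 0 then show ?case using w by simp
next
  case (Suc n)
  then have wn: "wf_pterm ar (seq ar R t n)" by simp
  have "\<not> normal_form ar R (seq ar R t n)" using Suc.prems by simp
  then show ?case using seq_step[OF wn] rstep_wf[OF tr] by blast
qed

lemma finite_uniform: "finite F \<Longrightarrow> (\<forall>q\<in>F. \<exists>N::nat. \<forall>i\<ge>N. P q i) \<Longrightarrow> \<exists>N. \<forall>q\<in>F. \<forall>i\<ge>N. P q i"
proof (induction F rule: finite_induct)
  case empty then show ?case by simp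
next
  case (insert x F)
  then obtain N1 where 1: "\<forall>q\<in>F. \<forall>i\<ge>N1. P q i" by blast
  obtain N2 where 2: "\<forall>i\<ge>N2. P x i" using insert.prems by blast
  show ?case using 1 2 by (intro exI[of _ "max N1 N2"]) auto
qed

lemma c_fun: "replace t \<pi> bot_term p = Some (FunS f) \<Longrightarrow> t p = Some (FunS f) \<and> take (length \<pi>) p \<noteq> \<pi>"
  unfolding replace_def bot_term_def by (auto split: if_splits)

lemma c_bot: "replace t \<pi> bot_term \<pi> = Some BotS"
  unfolding replace_def bot_term_def by simp



lemma wsucc_on: "wsucc (natLeq_on n) i j \<longleftrightarrow> j = Suc i \<and> j < n"
proof
  assume w: "wsucc (natLeq_on n) i j"
  then have a: "(i, j) \<in> natLeq_on n" "i \<noteq> j" "\<not> (\<exists>k. (i, k) \<in> natLeq_on n \<and> (k, j) \<in> natLeq_on n \<and> k \<noteq> i \<and> k \<noteq> j)"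
    unfolding wsucc_def by blast+
  have "j = Suc i"
  proof (rule ccontr)
    assume "j \<noteq> Suc i"
    then have "(i, Suc i) \<in> natLeq_on n \<and> (Suc i, j) \<in> natLeq_on n \<and> Suc i \<noteq> i \<and> Suc i \<noteq> j" using a(1,2) by auto
    then show False using a(3) by blast
  qed
  moreover have "j < n" using a(1) by auto
  ultimately show "j = Suc i \<and> j < n" by blast
next
  assume "j = Suc i \<and> j < n" then show "wsucc (natLeq_on n) i j" unfolding wsucc_def by auto
qed

lemma wsucc_natLeq: "wsucc natLeq i j \<longleftrightarrow> j = Suc i"
proof
  assume w: "wsucc natLeq i j"
  then have a: "(i, j) \<in> natLeq" "i \<noteq> j" "\<not> (\<exists>k. (i, k) \<in> natLeq \<and> (k, j) \<in> natLeq \<and> k \<noteq> i \<and> k \<noteq> j)"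
    unfolding wsucc_def by blast+
  show "j = Suc i"
  proof (rule ccontr)
    assume "j \<noteq> Suc i"
    then have "(i, Suc i) \<in> natLeq \<and> (Suc i, j) \<in> natLeq \<and> Suc i \<noteq> i \<and> Suc i \<noteq> j" using a(1,2) unfolding natLeq_def by auto
    then show False using a(3) by blast
  qed
next
  assume "j = Suc i" then show "wsucc natLeq i j" unfolding wsucc_def natLeq_def by auto
qed

lemma wlimit_on: "\<not> wlimit (natLeq_on n) l"
proof
  assume a: "wlimit (natLeq_on n) l"
  then obtain j where j: "(j, l) \<in> natLeq_on n" "j \<noteq> l" unfolding wlimit_def by blast
  then have "l = Suc (l - 1) \<and> l < n" by auto
  then have "wsucc (natLeq_on n) (l - 1) l" using wsucc_on by metis
  then show False using a unfolding wlimit_def by blast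
qed

lemma wlimit_natLeq: "\<not> wlimit natLeq l"
proof
  assume a: "wlimit natLeq l"
  then obtain j where j: "(j, l) \<in> natLeq" "j \<noteq> l" unfolding wlimit_def by blast
  then have "l = Suc (l - 1)" unfolding natLeq_def by auto
  then have "wsucc natLeq (l - 1) l" using wsucc_natLeq by metis
  then show False using a unfolding wlimit_def by blast
qed



lemma finite_case:
  assumes tr: "trs ar R" and w: "wf_pterm ar t" and nf: "normal_form ar R (seq ar R t n0)"
    and least: "\<forall>k<n0. \<not> normal_form ar R (seq ar R t k)"
  shows "strongly_p_reachable ar R t (seq ar R t n0)"
proof -
  define ts where "ts = seq ar R t"
  define ps where "ps = (\<lambda>n. pos_of ar R (ts n) n)"
  define W where "W = natLeq_on n0"
  have stp: "rstep ar R (ps k) (ts k) (ts (Suc k))" if "k < n0" for k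
  proof -
    have "wf_pterm ar (ts k)" unfolding ts_def using seq_wf[OF tr w] least that by simp
    then show ?thesis unfolding ps_def ts_def using seq_step least that by blast
  qed
  have FW: "Field W = {x. x < n0}" unfolding W_def by (rule Field_natLeq_on)
  have "strongly_p_converges ar R W ts ps t (ts n0)"
    unfolding strongly_p_converges_def Let_def
  proof (intro conjI ballI impI)
    show "Well_order W" unfolding W_def by (rule natLeq_on_Well_order)
  next
    assume "Field W = {}" then have "n0 = 0" using FW by auto
    then show "ts n0 = t" unfolding ts_def by simp
  next
    fix i assume i: "i \<in> Field W" and a: "\<forall>j\<in>Field W. (i, j) \<in> W"
    then have "(i, 0) \<in> W" using FW by auto
    then have "i = 0" unfolding W_def by auto
    then show "ts i = t" unfolding ts_def by simp
  next
    fix i j assume "i \<in> Field W" "j \<in> Field W" and s: "wsucc W i j"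
    then have "j = Suc i" "j < n0" using wsucc_on unfolding W_def by blast+
    then show "rstep ar R (ps i) (ts i) (ts j)" using stp by simp
  next
    fix i assume i: "i \<in> Field W" and a: "\<forall>j\<in>Field W. (j, i) \<in> W"
    have i0: "i < n0" using i FW by blast
    have "n0 - 1 \<in> Field W" using i0 FW by simp
    then have "(n0 - 1, i) \<in> W" using a by blast
    then have "n0 - 1 \<le> i" unfolding W_def by simp
    then have "Suc i = n0" using i0 by arith
    then show "rstep ar R (ps i) (ts i) (ts n0)" using stp by auto
  next
    fix l assume "l \<in> Field W" "wlimit W l"
    then show "is_liminf ar W (\<lambda>i. replace (ts i) (ps i) bot_term) {i \<in> Field W. (i, l) \<in> W \<and> i \<noteq> l} (ts l)"
      using wlimit_on unfolding W_def by blast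
  next
    assume a: "Field W \<noteq> {} \<and> \<not> (\<exists>m\<in>Field W. \<forall>j\<in>Field W. (j, m) \<in> W)"
    have ne: "Field W \<noteq> {}" and nm: "\<not> (\<exists>m\<in>Field W. \<forall>j\<in>Field W. (j, m) \<in> W)" using a by blast+
    obtain x where "x \<in> Field W" using ne by blast
    then have n0: "n0 > 0" using FW by simp
    then have m: "n0 - 1 \<in> Field W" using FW by simp
    have "\<forall>j\<in>Field W. (j, n0 - 1) \<in> W" unfolding FW unfolding W_def using n0 by auto
    then show "is_liminf ar W (\<lambda>i. replace (ts i) (ps i) bot_term) (Field W) (ts n0)" using nm m by blast
  qed
  then show ?thesis unfolding strongly_p_reachable_def ts_def by blast
qed



lemma infinite_case:
  assumes tr: "trs ar R" and orth: "orthogonal ar R" and lf: "left_finite R" and w: "wf_pterm ar t"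
    and nn: "\<forall>n. \<not> normal_form ar R (seq ar R t n)"
  shows "\<exists>t'. normal_form ar R t' \<and> strongly_p_reachable ar R t t'"
proof -
  define ts where "ts = seq ar R t"
  define ps where "ps = (\<lambda>n. pos_of ar R (ts n) n)"
  have wfs: "wf_pterm ar (ts n)" for n unfolding ts_def using seq_wf[OF tr w] nn by blast
  have stp: "rstep ar R (ps k) (ts k) (ts (Suc k))" for k
    unfolding ps_def ts_def using seq_step wfs nn unfolding ts_def by blast
  define c where "c i = replace (ts i) (ps i) bot_term" for i
  have wc: "wf_pterm ar (c i)" for i
  proof -
    have "ts i (ps i) \<noteq> None" using stp[of i] unfolding rstep_def by blast
    then show ?thesis unfolding c_def using wf_replace[OF wfs _ bot_wf] by blast
  qed
  define G where "G \<beta> = glbS (c ` {\<iota>. \<beta> \<le> \<iota>})" for \<beta>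
  have ne: "c ` {\<iota>. \<beta> \<le> \<iota>} \<noteq> {}" for \<beta> by auto
  have wcs: "\<forall>s\<in>c ` {\<iota>. \<beta> \<le> \<iota>}. wf_pterm ar s" for \<beta> using wc by blast
  have Gglb: "is_glb ar (c ` {\<iota>. \<beta> \<le> \<iota>}) (G \<beta>)" for \<beta> unfolding G_def using glb_is[OF ne wcs] .
  have mono: "\<forall>i j. i \<le> j \<longrightarrow> le_bot (G i) (G j)"
  proof (intro allI impI)
    fix i j :: nat assume ij: "i \<le> j"
    have wG: "wf_pterm ar (G i)" using Gglb[of i] unfolding is_glb_def by blast
    have "\<forall>s\<in>c ` {\<iota>. j \<le> \<iota>}. le_bot (G i) s"
    proof
      fix s assume "s \<in> c ` {\<iota>. j \<le> \<iota>}"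
      then have "s \<in> c ` {\<iota>. i \<le> \<iota>}" using ij by auto
      then show "le_bot (G i) s" unfolding G_def by (rule glb_lower)
    qed
    then show "le_bot (G i) (G j)" unfolding G_def[of j] using glb_greatest[OF ne wG] by blast
  qed
  define t' where "t' = lubC G"
  have wG: "wf_pterm ar (G i)" for i using Gglb[of i] unfolding is_glb_def by blast
  have lub: "is_lub ar (range G) t'" unfolding t'_def using lub_is[OF mono wG] .
  have setq: "{g. \<exists>\<beta>\<in>UNIV. is_glb ar (c ` {\<iota>\<in>UNIV. (\<beta>, \<iota>) \<in> natLeq}) g} = range G"
  proof -
    have e: "{\<iota>\<in>UNIV. (\<beta>, \<iota>) \<in> natLeq} = {\<iota>. \<beta> \<le> \<iota>}" for \<beta> unfolding natLeq_def by auto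
    show ?thesis unfolding e using Gglb glb_unique by blast
  qed
  have liminf: "is_liminf ar natLeq c UNIV t'" unfolding is_liminf_def setq using lub .
  have wt: "wf_pterm ar t'" using lub unfolding is_lub_def by blast
  have normal: "normal_form ar R t'"
    unfolding normal_form_def
  proof (intro conjI allI notI)
    show "wf_pterm ar t'" by (rule wt)
  next
    fix \<pi> assume rd: "redex_at ar R \<pi> t'"
    then obtain l r \<sigma> where lr: "(l, r) \<in> R" and ws: "\<forall>x. wf_pterm ar (\<sigma> x)" and eq: "subterm t' \<pi> = subst \<sigma> l"
      unfolding redex_at_def by blast
    have wl: "wf_term ar l" and rnv: "\<forall>x. l [] \<noteq> Some (VarS x)" using tr lr unfolding trs_def by auto
    have wl': "wf_pterm ar l" using wl wf_term_pterm by blast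
    have nb: "\<forall>p. l p \<noteq> Some BotS" using wl unfolding wf_term_def by blast
    have lin: "\<forall>p q x. l p = Some (VarS x) \<and> l q = Some (VarS x) \<longrightarrow> p = q"
      using orth lr unfolding orthogonal_def left_linear_def by blast
    have fin: "finite {p. l p \<noteq> None}" using lf lr unfolding left_finite_def by blast
    define F where "F = {q. \<exists>f. l q = Some (FunS f)}"
    have finF: "finite F" using fin unfolding F_def by (rule rev_finite_subset) auto
    have tF: "t' (\<pi> @ q) = Some (FunS f)" if "l q = Some (FunS f)" for q f
    proof -
      have "subst \<sigma> l q = Some (FunS f)" using subst_fun[OF wl' that] .
      then show ?thesis using eq unfolding subterm_def by (metis)
    qed
    have ev: "\<forall>q\<in>F. \<exists>N. \<forall>i\<ge>N. c i (\<pi> @ q) = t' (\<pi> @ q)"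
    proof
      fix q assume "q \<in> F"
      then obtain f where f: "l q = Some (FunS f)" unfolding F_def by blast
      have t'q: "lubC G (\<pi> @ q) = Some (FunS f)" using tF[OF f] unfolding t'_def .
      obtain n where n: "G n (\<pi> @ q) = Some (FunS f)" using lub_val[OF t'q] by blast
      have "\<forall>s\<in>c ` {\<iota>. n \<le> \<iota>}. s (\<pi> @ q) = Some (FunS f)" using glb_nonbot[OF n[unfolded G_def]] by simp
      then have "\<forall>i\<ge>n. c i (\<pi> @ q) = t' (\<pi> @ q)" using tF[OF f] by auto
      then show "\<exists>N. \<forall>i\<ge>N. c i (\<pi> @ q) = t' (\<pi> @ q)" by blast
    qed
    obtain N where N: "\<forall>q\<in>F. \<forall>i\<ge>N. c i (\<pi> @ q) = t' (\<pi> @ q)" using finite_uniform[OF finF ev] by blast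
    have fi: "ts i (\<pi> @ q) = Some (FunS f) \<and> take (length (ps i)) (\<pi> @ q) \<noteq> ps i"
      if "i \<ge> N" "l q = Some (FunS f)" for i q f
    proof -
      have "q \<in> F" using that unfolding F_def by blast
      then have "c i (\<pi> @ q) = Some (FunS f)" using N that tF by simp
      then show ?thesis unfolding c_def by (rule c_fun)
    qed
    obtain v0 where v0: "l [] = Some v0" using wf_root[OF wl'] by blast
    obtain f0 where f0: "l [] = Some (FunS f0)"
    proof (cases v0)
      case (FunS f) then show ?thesis using that v0 by simp
    next
      case (VarS x) then show ?thesis using rnv v0 by simp
    next
      case BotS then show ?thesis using nb v0 by simp
    qed
    have redi: "redex_at ar R \<pi> (ts i)" if iN: "i \<ge> N" for i
    proof -
      have tpi: "ts i \<pi> \<noteq> None" using fi[OF iN f0] by simp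
      have wsub: "wf_pterm ar (subterm (ts i) \<pi>)" using wf_subterm[OF wfs tpi] .
      have fn: "\<forall>q f. l q = Some (FunS f) \<longrightarrow> subterm (ts i) \<pi> q = Some (FunS f)"
        using fi[OF iN] unfolding subterm_def by blast
      obtain \<sigma>' where "\<forall>x. wf_pterm ar (\<sigma>' x)" "subterm (ts i) \<pi> = subst \<sigma>' l"
        using match_subst[OF wsub wl lin rnv fn] by blast
      then show ?thesis unfolding redex_at_def using tpi lr by blast
    qed
    obtain m where m: "m \<ge> N" "enum m = \<pi>" using enum_inf by blast
    have rm: "redex_at ar R (enum m) (ts m)" using redi[OF m(1)] m(2) by simp
    have "(LEAST k. m \<le> k \<and> redex_at ar R (enum k) (ts m)) = m"
      by (rule Least_equality) (use rm in auto)
    then have "ps m = \<pi>" unfolding ps_def pos_of_def using m(2) by simp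
    then show False using fi[OF m(1) f0] by simp
  qed
  have "strongly_p_converges ar R natLeq ts ps t t'"
    unfolding strongly_p_converges_def Let_def Field_natLeq
  proof (intro conjI ballI impI)
    show "well_order natLeq" using natLeq_Well_order Field_natLeq by simp
  next
    assume "(UNIV :: nat set) = {}" then show "t' = t" by simp
  next
    fix i assume "i \<in> UNIV" and a: "\<forall>j\<in>UNIV. (i, j) \<in> natLeq"
    then have "(i, 0) \<in> natLeq" by blast
    then have "i = 0" unfolding natLeq_def by simp
    then show "ts i = t" unfolding ts_def by simp
  next
    fix i j assume "i \<in> UNIV" "j \<in> UNIV" "wsucc natLeq i j"
    then have "j = Suc i" using wsucc_natLeq by blast
    then show "rstep ar R (ps i) (ts i) (ts j)" using stp by simp
  next
    fix i assume "i \<in> UNIV" and a: "\<forall>j\<in>UNIV. (j, i) \<in> natLeq"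
    then have "(Suc i, i) \<in> natLeq" by blast
    then show "rstep ar R (ps i) (ts i) t'" unfolding natLeq_def by simp
  next
    fix l assume "l \<in> UNIV" "wlimit natLeq l"
    then show "is_liminf ar natLeq (\<lambda>i. replace (ts i) (ps i) bot_term) {i \<in> UNIV. (i, l) \<in> natLeq \<and> i \<noteq> l} (ts l)"
      using wlimit_natLeq by blast
  next
    assume "UNIV \<noteq> {} \<and> \<not> (\<exists>m\<in>UNIV. \<forall>j\<in>UNIV. (j, m) \<in> natLeq)"
    show "is_liminf ar natLeq (\<lambda>i. replace (ts i) (ps i) bot_term) UNIV t'"
      using liminf unfolding c_def .
  qed
  then show ?thesis using normal unfolding strongly_p_reachable_def by blast
qed


theorem theorem6p14:
  fixes ar :: "'f \<Rightarrow> nat" and R :: "('f, 'v) trs" and t :: "('f, 'v) pterm"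
  assumes "trs ar R" and "orthogonal ar R" and "left_finite R" and "wf_pterm ar t"
  shows "\<exists>t'. normal_form ar R t' \<and> strongly_p_reachable ar R t t'"
proof (cases "\<exists>n. normal_form ar R (seq ar R t n)")
  case True
  define n0 where "n0 = (LEAST n. normal_form ar R (seq ar R t n))"
  have nf: "normal_form ar R (seq ar R t n0)" unfolding n0_def using True by (rule LeastI_ex)
  have least: "\<forall>k<n0. \<not> normal_form ar R (seq ar R t k)" unfolding n0_def using not_less_Least by blast
  show ?thesis using finite_case[OF assms(1) assms(4) nf least] nf by blast
next
  case False
  then show ?thesis using infinite_case[OF assms] by blast
qed

end
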